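(* Let $(\xi,\eta)$ satisfy $\xi>0$, $\eta>0$, $\xi+\eta<1$, and let $(i_n)$, $(j_n)$ be sequences of non-negative integers with $i_n/n\to\xi$ and $j_n/n\to\eta$ as $n\to\infty$. Let $A_{i,j}(1/n)$ denote the coefficient of $u^iv^jw^{n-i-j}$ in $P_{1/n}(u,v,w)$. Then $A_{i_n,j_n}(1/n)>0$ for all sufficiently large $n$, and $$\lim_{n\to\infty}\frac1n\ln A_{i_n,j_n}(1/n)=(1-\eta)\,H\!\Big(\frac{\xi}{1-\eta}\Big)+(\xi+\eta)\,H\!\Big(\frac{\xi}{\xi+\eta}\Big),$$ where $H(p)=-p\ln p-(1-p)\ln(1-p)$.
   Context: Markov polynomials. Let $x,y,z$ be indeterminates. Consider the set consisting of all rationals $\rho\in[0,1]$, each written in lowest terms $\rho=a/b$ with integers $a\ge 0$, $b\ge 1$, together with the formal symbol $1/0$. Define Laurent polynomials $M_\rho(x,y,z)$ recursively by $M_{1/0}=y$, $M_{0/1}=x$, $M_{1/1}=\frac{x^2+y^2}{z}$, and: whenever $a/b$, $c/d$ are in this set with $|ad-bc|=1$ and $(a+2c)/(b+2d)\in[0,1]$, then $M_{\frac{a+2c}{b+2d}}=\big(M_{c/d}^2+M_{\frac{a+c}{b+d}}^2\big)/M_{a/b}$. This determines $M_\rho$ for every rational $\rho\in[0,1]$. Numerator. For coprime $1\le a\le b$, $P_{a/b}(u,v,w)$ denotes the homogeneous polynomial of degree $a+b-1$ such that $M_{a/b}(x,y,z)=P_{a/b}(x^2,y^2,z^2)/(x^{a-1}y^{b-1}z^{a+b-1})$;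 its existence is known. *)

theory Defs
  imports Complex_Main "HOL-Computational_Algebra.Polynomial" "HOL-Computational_Algebra.Fraction_Field"
begin

text \<open>Trivariate integer polynomials are modelled as nested univariate polynomials
  \<open>int poly poly poly\<close>: the outer variable is u (resp. x), the middle one v (resp. y),
  the inner one w (resp. z). The coefficient of u^i v^j w^k in P is
  coeff (coeff (coeff P i) j) k. Laurent polynomials / rational functions in x,y,z
  live in the fraction field \<open>int poly poly poly fract\<close>.\<close>

type_synonym mpoly3 = "int poly poly poly"

definition frac :: "mpoly3 \<Rightarrow> mpoly3 fract" where "frac p = Fract p 1"

definition Xv :: mpoly3 where "Xv = [:0, 1:]"
definition Yv :: mpoly3 where "Yv = [:[:0, 1:]:]"
definition Zv :: mpoly3 where "Zv = [:[:[:0, 1:]:]:]"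

definition subst3 :: "mpoly3 \<Rightarrow> mpoly3 \<Rightarrow> mpoly3 \<Rightarrow> mpoly3 \<Rightarrow> mpoly3" where
  "subst3 P a b c =
     poly (map_poly (\<lambda>q. poly (map_poly (\<lambda>r. poly (map_poly of_int r) c) q) b) P) a"

text \<open>The recursive definition of Markov polynomials M_{a/b}; a rational a/b in lowest
  terms (or the symbol 1/0) is represented by the pair (a,b).\<close>
inductive markov_rel :: "nat \<times> nat \<Rightarrow> mpoly3 fract \<Rightarrow> bool" where
  base_inf: "markov_rel (1, 0) (frac Yv)"
| base_zero: "markov_rel (0, 1) (frac Xv)"
| base_one: "markov_rel (1, 1) ((frac Xv ^ 2 + frac Yv ^ 2) / frac Zv)"
| step: "\<lbrakk> markov_rel (a, b) Ma; markov_rel (c, d) Mc; markov_rel (a + c, b + d) Mac;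
           \<bar>int a * int d - int b * int c\<bar> = 1;
           0 < b + 2 * d; a + 2 * c \<le> b + 2 * d \<rbrakk>
         \<Longrightarrow> markov_rel (a + 2 * c, b + 2 * d) ((Mc ^ 2 + Mac ^ 2) / Ma)"

definition markovM :: "nat \<Rightarrow> nat \<Rightarrow> mpoly3 fract" where
  "markovM a b = (THE m. markov_rel (a, b) m)"

definition markovP :: "nat \<Rightarrow> nat \<Rightarrow> mpoly3" where
  "markovP a b = (THE P. markovM a b =
      frac (subst3 P (Xv ^ 2) (Yv ^ 2) (Zv ^ 2))
      / frac (Xv ^ (a - 1) * Yv ^ (b - 1) * Zv ^ (a + b - 1)))"

definition coeffA :: "nat \<Rightarrow> nat \<Rightarrow> nat \<Rightarrow> int" where
  "coeffA i j n = (if i + j \<le> n then coeff (coeff (coeff (markovP 1 n) i) j) (n - i - j) else 0)"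

definition entropyH :: "real \<Rightarrow> real" where
  "entropyH p = - p * ln p - (1 - p) * ln (1 - p)"

end

theory Submission
  imports Defs
begin


lemma ev_pCons:
  "f 0 = 0 \<Longrightarrow> poly (map_poly f (pCons a p)) x = f a + x * poly (map_poly f p) x"
  by (simp add: map_poly_pCons)

locale hm =
  fixes f :: "'a::comm_ring_1 \<Rightarrow> 'b::comm_ring_1"
  assumes f0: "f 0 = 0" and f1: "f 1 = 1" and fadd: "\<And>a b. f (a + b) = f a + f b"
    and fmult: "\<And>a b. f (a * b) = f a * f b"
begin

lemma ev_add: "poly (map_poly f (p + q)) x = poly (map_poly f p) x + poly (map_poly f q) x"
proof (induction p q rule: poly_induct2)
  case 0 then show ?case by simp
next
  case (pCons a p b q)
  then show ?case by (simp add: ev_pCons f0 fadd algebra_simps)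
qed

lemma ev_smult: "poly (map_poly f (smult a q)) x = f a * poly (map_poly f q) x"
  by (induction q) (simp_all add: ev_pCons f0 fmult algebra_simps)

lemma ev_mult: "poly (map_poly f (p * q)) x = poly (map_poly f p) x * poly (map_poly f q) x"
proof (induction p)
  case 0 then show ?case by simp
next
  case (pCons a p)
  have "pCons a p * q = smult a q + pCons 0 (p * q)" by simp
  then show ?case using pCons by (simp add: ev_add ev_smult ev_pCons f0 algebra_simps)
qed

lemma ev_diff: "poly (map_poly f (p - q)) x = poly (map_poly f p) x - poly (map_poly f q) x"
  using ev_add[of "p - q" q] by simp



lemma ev_hm: "hm (\<lambda>p. poly (map_poly f p) x)"
  by unfold_locales (simp_all add: ev_add ev_mult f1 map_poly_1)

end

lemma hm_of_int: "hm (of_int :: int \<Rightarrow> 'a::comm_ring_1)"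
  by unfold_locales simp_all

definition psi :: "mpoly3 \<Rightarrow> int poly \<Rightarrow> mpoly3" where
  "psi c r = poly (map_poly of_int r) c"
definition phi :: "mpoly3 \<Rightarrow> mpoly3 \<Rightarrow> int poly poly \<Rightarrow> mpoly3" where
  "phi b c q = poly (map_poly (psi c) q) b"

lemma hm_psi: "hm (psi c)"
  unfolding psi_def using hm.ev_hm[OF hm_of_int] .
lemma hm_phi: "hm (phi b c)"
  unfolding phi_def using hm.ev_hm[OF hm_psi] .
lemma subst3_alt: "subst3 P a b c = poly (map_poly (phi b c) P) a"
  by (simp add: subst3_def phi_def[abs_def] psi_def[abs_def])
lemma hm_subst3: "hm (\<lambda>P. subst3 P a b c)"
  unfolding subst3_alt using hm.ev_hm[OF hm_phi] .

lemma subst3_add: "subst3 (p + q) a b c = subst3 p a b c + subst3 q a b c"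
  using hm.fadd[OF hm_subst3] .
lemma subst3_mult: "subst3 (p * q) a b c = subst3 p a b c * subst3 q a b c"
  using hm.fmult[OF hm_subst3] .
lemma subst3_diff: "subst3 (p - q) a b c = subst3 p a b c - subst3 q a b c"
  using subst3_add[of "p - q" q a b c] by simp
lemma subst3_one: "subst3 1 a b c = 1"
  using hm.f1[OF hm_subst3] .
lemma subst3_zero: "subst3 0 a b c = 0"
  using hm.f0[OF hm_subst3] .
lemma subst3_X: "subst3 Xv a b c = a"
  by (simp add: subst3_alt Xv_def map_poly_pCons hm.f0[OF hm_phi] hm.f1[OF hm_phi])
lemma subst3_Y: "subst3 Yv a b c = b"
  by (simp add: subst3_alt Yv_def phi_def map_poly_pCons hm.f0[OF hm_phi] hm.f0[OF hm_psi] hm.f1[OF hm_psi])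
lemma subst3_Z: "subst3 Zv a b c = c"
  by (simp add: subst3_alt Zv_def phi_def psi_def map_poly_pCons hm.f0[OF hm_phi] hm.f0[OF hm_psi])



lemma coeff_pcompose_sq:
  fixes p :: "'a::comm_ring_1 poly"
  shows "coeff (pcompose p [:0,0,1:]) (2*i) = coeff p i"
proof (induction p arbitrary: i)
  case 0 then show ?case by simp
next
  case (pCons a p)
  have e: "pcompose (pCons a p) [:0,0,1:] = pCons a (pCons 0 (pcompose p [:0,0,1:]))"
    by (simp add: pcompose_pCons)
  show ?case
  proof (cases i)
    case 0 then show ?thesis by (simp add: e)
  next
    case (Suc i')
    have "2 * i = Suc (Suc (2*i'))" using Suc by simp
    then show ?thesis using pCons.IH[of i'] Suc by (simp add: e)
  qed
qed

lemma psi_sq: "psi [:[:[:0,0,1:]:]:] r = [:[: pcompose r [:0,0,1:] :]:]"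
proof (induction r)
  case 0 then show ?case by (simp add: psi_def)
next
  case (pCons a r)
  have "psi [:[:[:0,0,1:]:]:] (pCons a r) = of_int a + [:[:[:0,0,1:]:]:] * psi [:[:[:0,0,1:]:]:] r"
    by (simp add: psi_def map_poly_pCons)
  also have "\<dots> = [:[: pcompose (pCons a r) [:0,0,1:] :]:]"
    using pCons.IH by (simp add: pcompose_pCons of_int_poly)
  finally show ?case .
qed

lemma phi_sq: "phi [:[:0,0,1:]:] [:[:[:0,0,1:]:]:] q
   = [: pcompose (map_poly (\<lambda>r. pcompose r [:0,0,1:]) q) [:0,0,1:] :]"
proof (induction q)
  case 0 then show ?case by (simp add: phi_def)
next
  case (pCons a q)
  have "phi [:[:0,0,1:]:] [:[:[:0,0,1:]:]:] (pCons a q) = psi [:[:[:0,0,1:]:]:] a + [:[:0,0,1:]:] * phi [:[:0,0,1:]:] [:[:[:0,0,1:]:]:] q"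
    by (simp add: phi_def map_poly_pCons hm.f0[OF hm_psi])
  also have "\<dots> = [: pcompose (map_poly (\<lambda>r. pcompose r [:0,0,1:]) (pCons a q)) [:0,0,1:] :]"
    using pCons.IH by (simp add: pcompose_pCons psi_sq map_poly_pCons)
  finally show ?case .
qed

lemma sq_polys: "Xv^2 = [:0,0,1:]" "Yv^2 = [:[:0,0,1:]:]" "Zv^2 = [:[:[:0,0,1:]:]:]"
  by (simp_all add: Xv_def Yv_def Zv_def power2_eq_square)

lemma subst3_sq_alt:
  "subst3 P (Xv^2) (Yv^2) (Zv^2) = pcompose (map_poly (\<lambda>q. pcompose (map_poly (\<lambda>r. pcompose r [:0,0,1:]) q) [:0,0,1:]) P) [:0,0,1:]"
proof -
  have "subst3 P (Xv^2) (Yv^2) (Zv^2) = poly (map_poly (phi [:[:0,0,1:]:] [:[:[:0,0,1:]:]:]) P) [:0,0,1:]"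
    by (simp add: subst3_alt sq_polys)
  also have "map_poly (phi [:[:0,0,1:]:] [:[:[:0,0,1:]:]:]) P = map_poly (\<lambda>x. [:x:]) (map_poly (\<lambda>q. pcompose (map_poly (\<lambda>r. pcompose r [:0,0,1:]) q) [:0,0,1:]) P)"
    by (simp add: map_poly_map_poly o_def phi_sq[abs_def])
  finally show ?thesis by (simp add: pcompose_altdef)
qed

definition c3 :: "mpoly3 \<Rightarrow> nat \<Rightarrow> nat \<Rightarrow> nat \<Rightarrow> int" where
  "c3 p i j k = coeff (coeff (coeff p i) j) k"

lemma c3_subst3_sq: "c3 (subst3 P (Xv^2) (Yv^2) (Zv^2)) (2*i) (2*j) (2*k) = c3 P i j k"
  by (simp add: c3_def subst3_sq_alt coeff_pcompose_sq coeff_map_poly)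

lemma subst3_sq_inj:
  assumes "subst3 P (Xv^2) (Yv^2) (Zv^2) = subst3 Q (Xv^2) (Yv^2) (Zv^2)"
  shows "P = Q"
proof -
  have "c3 P i j k = c3 Q i j k" for i j k
    using c3_subst3_sq[of P i j k] c3_subst3_sq[of Q i j k] assms by simp
  then show ?thesis by (simp add: c3_def poly_eq_iff)
qed



fun Pn :: "nat \<Rightarrow> mpoly3" where
  "Pn 0 = 1"
| "Pn (Suc 0) = Xv + Yv"
| "Pn (Suc (Suc n)) = (Xv + Yv + Zv) * Pn (Suc n) - Yv * (Zv * Pn n)"

lemma c3_add: "c3 (p + q) i j k = c3 p i j k + c3 q i j k"
  by (simp add: c3_def)
lemma c3_diff: "c3 (p - q) i j k = c3 p i j k - c3 q i j k"
  by (simp add: c3_def)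
lemma c3_X: "c3 (Xv * p) i j k = (if i = 0 then 0 else c3 p (i - 1) j k)"
  by (simp add: c3_def Xv_def coeff_pCons split: nat.splits)
lemma c3_Y: "c3 (Yv * p) i j k = (if j = 0 then 0 else c3 p i (j - 1) k)"
  by (simp add: c3_def Yv_def coeff_pCons split: nat.splits)
lemma c3_Z: "c3 (Zv * p) i j k = (if k = 0 then 0 else c3 p i j (k - 1))"
  by (simp add: c3_def Zv_def coeff_pCons split: nat.splits)
lemma c3_one: "c3 1 i j k = (if i = 0 \<and> j = 0 \<and> k = 0 then 1 else 0)"
  by (simp add: c3_def coeff_1)

definition cf :: "nat \<Rightarrow> nat \<Rightarrow> nat \<Rightarrow> int" where
  "cf i j k = int ((i + j) choose i) * int ((i + k - 1) choose k)"

lemma cf0: "cf 0 j k = (if k = 0 then 1 else 0)"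
  by (simp add: cf_def)

lemma cf_rec:
  assumes "i + j + k \<ge> 2"
  shows "cf i j k = (if i = 0 then 0 else cf (i-1) j k) + (if j = 0 then 0 else cf i (j-1) k)
     + (if k = 0 then 0 else cf i j (k-1)) - (if j = 0 \<or> k = 0 then 0 else cf i (j-1) (k-1))"
proof (cases i)
  case 0
  then show ?thesis using assms by (cases j; cases k) (auto simp: cf0)
next
  case (Suc a)
  have P1: "int (Suc (a + c) choose Suc c) = int ((a + c) choose c) + int ((a+c) choose Suc c)" for c
    by simp
  have P2: "int (Suc (Suc (a + b)) choose Suc a) = int (Suc (a + b) choose a) + int (Suc (a+b) choose Suc a)" for b
    by simp
  show ?thesis
  proof (cases j)
    case 0
    show ?thesis
    proof (cases k)
      case 0 then show ?thesis using \<open>j=0\<close> Suc by (simp add: cf_def)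
    next
      case (Suc c)
      then show ?thesis using \<open>j=0\<close> \<open>i = Suc a\<close> P1[of c]
        by (simp add: cf_def algebra_simps)
    qed
  next
    case (Suc b)
    show ?thesis
    proof (cases k)
      case 0 then show ?thesis using \<open>j=Suc b\<close> \<open>i = Suc a\<close> P2[of b]
        by (simp add: cf_def algebra_simps)
    next
      case (Suc c)
      then show ?thesis using \<open>j=Suc b\<close> \<open>i = Suc a\<close> P1[of c] P2[of b]
        by (simp add: cf_def algebra_simps)
    qed
  qed
qed

lemma c3_Pn: "c3 (Pn n) i j k = (if i + j + k = n then cf i j k else 0)"
proof (induction n arbitrary: i j k rule: Pn.induct)
  case 1 then show ?case by (simp add: c3_one cf_def)
next
  case 2 then show ?case
    by (cases i; cases j; cases k) (auto simp add: c3_add c3_X[of 1, simplified] c3_Y[of 1, simplified] c3_one cf_def)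
next
  case (3 n)
  have e: "c3 (Pn (Suc (Suc n))) i j k = c3 (Xv * Pn (Suc n)) i j k + c3 (Yv * Pn (Suc n)) i j k
     + c3 (Zv * Pn (Suc n)) i j k - c3 (Yv * (Zv * Pn n)) i j k"
    by (simp add: distrib_right c3_add c3_diff)
  show ?case
  proof (cases "i + j + k = Suc (Suc n)")
    case True
    then have "cf i j k = (if i = 0 then 0 else cf (i-1) j k) + (if j = 0 then 0 else cf i (j-1) k)
     + (if k = 0 then 0 else cf i j (k-1)) - (if j = 0 \<or> k = 0 then 0 else cf i (j-1) (k-1))"
      by (intro cf_rec) simp
    moreover have "c3 (Xv * Pn (Suc n)) i j k = (if i = 0 then 0 else cf (i-1) j k)"
      using True by (simp add: c3_X 3)
    moreover have "c3 (Yv * Pn (Suc n)) i j k = (if j = 0 then 0 else cf i (j-1) k)"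
      using True by (simp add: c3_Y 3)
    moreover have "c3 (Zv * Pn (Suc n)) i j k = (if k = 0 then 0 else cf i j (k-1))"
      using True by (simp add: c3_Z 3)
    moreover have "c3 (Yv * (Zv * Pn n)) i j k = (if j = 0 \<or> k = 0 then 0 else cf i (j-1) (k-1))"
      using True by (simp add: c3_Y c3_Z 3)
    ultimately show ?thesis unfolding e using True by simp
  next
    case False
    have "c3 (Xv * Pn (Suc n)) i j k = 0"
      using False by (simp add: c3_X 3)
    moreover have "c3 (Yv * Pn (Suc n)) i j k = 0"
      using False by (simp add: c3_Y 3)
    moreover have "c3 (Zv * Pn (Suc n)) i j k = 0"
      using False by (simp add: c3_Z 3)
    moreover have "c3 (Yv * (Zv * Pn n)) i j k = 0"
      using False by (simp add: c3_Y c3_Z 3) arith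
    ultimately show ?thesis unfolding e using False by simp
  qed
qed



lemma frac_add: "frac (p + q) = frac p + frac q" by (simp add: frac_def)
lemma frac_mult: "frac (p * q) = frac p * frac q" by (simp add: frac_def)
lemma frac_diff: "frac (p - q) = frac p - frac q" by (simp add: frac_def)
lemma frac_one: "frac 1 = 1" by (simp add: frac_def One_fract_def)
lemma frac_zero: "frac 0 = 0" by (simp add: frac_def Zero_fract_def)
lemma frac_power: "frac (p ^ n) = frac p ^ n"
  by (induction n) (simp_all add: frac_one frac_mult)
lemma frac_inj: "frac p = frac q \<longleftrightarrow> p = q" by (simp add: frac_def eq_fract)
lemma frac_nz: "frac p \<noteq> 0 \<longleftrightarrow> p \<noteq> 0" using frac_inj[of p 0] by (simp add: frac_zero)

abbreviation "fx \<equiv> frac Xv"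
abbreviation "fy \<equiv> frac Yv"
abbreviation "fz \<equiv> frac Zv"

lemma fy_nz: "fy \<noteq> 0" by (simp add: frac_nz Yv_def)
lemma fz_nz: "fz \<noteq> 0" by (simp add: frac_nz Zv_def)

definition Sf :: "nat \<Rightarrow> mpoly3 fract" where
  "Sf n = frac (subst3 (Pn n) (Xv^2) (Yv^2) (Zv^2))"

lemma Sf_0: "Sf 0 = 1" by (simp add: Sf_def subst3_one frac_one)
lemma Sf_1: "Sf 1 = fx^2 + fy^2" by (simp add: Sf_def subst3_add subst3_X subst3_Y frac_add frac_power)
lemma Sf_1': "Sf (Suc 0) = fx^2 + fy^2" using Sf_1 by simp
lemma Sf_SS: "Sf (Suc (Suc n)) = (fx^2 + fy^2 + fz^2) * Sf (Suc n) - fy^2 * fz^2 * Sf n"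
  by (simp add: Sf_def subst3_add subst3_mult subst3_diff subst3_X subst3_Y subst3_Z
      frac_add frac_mult frac_diff frac_power mult.assoc)

lemma Sf_inv: "Sf (Suc (Suc n)) * Sf n - Sf (Suc n)^2 = fx^2 * fz^2 * (fy^2 * fz^2)^n"
proof (induction n)
  case 0 then show ?case by (simp add: Sf_SS Sf_0 Sf_1') (simp add: algebra_simps power2_eq_square)
next
  case (Suc n)
  have "Sf (Suc (Suc (Suc n))) * Sf (Suc n) - Sf (Suc (Suc n))^2
      = fy^2 * fz^2 * (Sf (Suc (Suc n)) * Sf n - Sf (Suc n)^2)"
    by (simp only: Sf_SS[of "Suc n"] Sf_SS[of n]) (simp add: algebra_simps power2_eq_square)
  then show ?case using Suc by simp
qed

lemma Pn_nz: "Pn n \<noteq> 0"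
proof
  assume "Pn n = 0"
  then have "c3 (Pn n) 0 n 0 = 0" by (simp add: c3_def)
  then show False by (simp add: c3_Pn cf_def)
qed

lemma Sf_nz: "Sf n \<noteq> 0"
proof
  assume "Sf n = 0"
  then have "subst3 (Pn n) (Xv^2) (Yv^2) (Zv^2) = subst3 0 (Xv^2) (Yv^2) (Zv^2)"
    using frac_nz unfolding Sf_def subst3_zero by blast
  then show False using subst3_sq_inj Pn_nz by blast
qed

fun Lm :: "nat \<Rightarrow> mpoly3 fract" where
  "Lm 0 = fy"
| "Lm (Suc 0) = (fx^2 + fy^2) / fz"
| "Lm (Suc (Suc n)) = (fx^2 + Lm (Suc n)^2) / Lm n"

lemma rel_0: "markov_rel (0, d) m \<Longrightarrow> d = 1 \<and> m = fx"
  by (induction "(0::nat, d)" m arbitrary: d rule: markov_rel.induct) auto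

lemma rel_1_exists: "markov_rel (1, n) (Lm n)"
proof (induction n rule: Lm.induct)
  case 1 then show ?case using markov_rel.base_inf by simp
next
  case 2 then show ?case using markov_rel.base_one by simp
next
  case (3 n)
  have "markov_rel (1 + 2 * 0, n + 2 * 1) ((fx ^ 2 + Lm (Suc n) ^ 2) / Lm n)"
    by (rule markov_rel.step[OF 3(2) markov_rel.base_zero]) (use 3(1) in simp_all)
  then show ?case by simp
qed

lemma rel_1_unique: "markov_rel (1, n) m \<Longrightarrow> m = Lm n"
proof (induction n arbitrary: m rule: less_induct)
  case (less n)
  from less.prems show ?case
  proof (cases rule: markov_rel.cases)
    case base_inf then show ?thesis by simp
  next
    case base_zero then show ?thesis by simp
  next
    case base_one then show ?thesis by simp
  next
    case (step a b Ma c d Mc Mac)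
    have c0: "c = 0" "a = 1" using step(1) by auto
    then have d1: "d = 1" "Mc = fx" using rel_0[of d Mc] step(5) by auto
    then have nb: "n = Suc (Suc b)" using step(2) by simp
    have "Ma = Lm b" using less.IH[of b Ma] step(4) c0 nb by simp
    moreover have "Mac = Lm (Suc b)" using less.IH[of "Suc b" Mac] step(6) c0 d1 nb by simp
    ultimately show ?thesis using step(3) d1 nb by simp
  qed
qed

lemma markovM_1: "markovM 1 n = Lm n"
  unfolding markovM_def using rel_1_exists rel_1_unique by blast



lemma Lm_Sf_pair: "Lm (Suc m) = Sf (Suc m) / (fy^m * fz^(Suc m))
   \<and> Lm (Suc (Suc m)) = Sf (Suc (Suc m)) / (fy^(Suc m) * fz^(Suc (Suc m)))"
proof (induction m)
  case 0
  have a: "Lm (Suc 0) = Sf (Suc 0) / (fy^0 * fz^(Suc 0))" by (simp add: Sf_1')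
  have "Lm (Suc (Suc 0)) = Sf (Suc (Suc 0)) / (fy^(Suc 0) * fz^(Suc (Suc 0)))"
    using fy_nz fz_nz
    by (simp add: Sf_SS Sf_1' Sf_0 field_simps) (simp add: algebra_simps power2_eq_square power4_eq_xxxx)
  then show ?case using a by simp
next
  case (Suc m)
  define A where "A = fy^m"
  define B where "B = fz^m"
  define S1 where "S1 = Sf (Suc m)"
  define S2 where "S2 = Sf (Suc (Suc m))"
  define S3 where "S3 = Sf (Suc (Suc (Suc m)))"
  have nz: "A \<noteq> 0" "B \<noteq> 0" "S1 \<noteq> 0" "fy \<noteq> 0" "fz \<noteq> 0"
    using fy_nz fz_nz Sf_nz by (auto simp: A_def B_def S1_def)
  have inv: "S3 * S1 = S2^2 + fx^2 * fz^2 * (fy^2 * fz^2 * A^2 * B^2)"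
    using Sf_inv[of "Suc m"] unfolding S1_def S2_def S3_def A_def B_def
    by (simp add: power_mult_distrib power_mult[symmetric] algebra_simps power2_eq_square)
  have h1: "Lm (Suc m) = S1 / (A * (fz * B))" using Suc.IH by (simp del: Lm.simps add: S1_def A_def B_def)
  have h2: "Lm (Suc (Suc m)) = S2 / ((fy * A) * (fz * (fz * B)))" using Suc.IH by (simp del: Lm.simps add: S2_def A_def B_def)
  have "Lm (Suc (Suc (Suc m))) = (fx^2 + Lm (Suc (Suc m))^2) / Lm (Suc m)" by simp
  also have "\<dots> = (S3 * S1) / (fy * fy * A * (fz * fz * fz * B) * S1)"
    unfolding h1 h2 inv using nz by (simp add: field_simps power2_eq_square)
  also have "\<dots> = S3 / (fy * fy * A * (fz * fz * fz * B))"
    using nz by simp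
  finally have "Lm (Suc (Suc (Suc m))) = Sf (Suc (Suc (Suc m))) / (fy ^ Suc (Suc m) * fz ^ Suc (Suc (Suc m)))"
    by (simp add: S3_def A_def B_def algebra_simps)
  then show ?case using Suc.IH by (simp del: Lm.simps)
qed

lemma Lm_Sf: "n \<ge> 1 \<Longrightarrow> Lm n = Sf n / (fy^(n-1) * fz^n)"
  using Lm_Sf_pair[of "n - 1"] by (cases n) auto

lemma markovP_1: assumes "n \<ge> 1" shows "markovP 1 n = Pn n"
proof -
  have D: "frac (Xv ^ (1 - 1) * Yv ^ (n - 1) * Zv ^ (1 + n - 1)) = fy^(n-1) * fz^n"
    by (simp add: frac_mult frac_power frac_one)
  have Dnz: "fy^(n-1) * fz^n \<noteq> 0" using fy_nz fz_nz by simp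
  show ?thesis unfolding markovP_def
  proof (rule the_equality)
    show "markovM 1 n = frac (subst3 (Pn n) (Xv^2) (Yv^2) (Zv^2)) / frac (Xv ^ (1 - 1) * Yv ^ (n - 1) * Zv ^ (1 + n - 1))"
      unfolding D markovM_1 Lm_Sf[OF assms] Sf_def ..
  next
    fix P assume "markovM 1 n = frac (subst3 P (Xv^2) (Yv^2) (Zv^2)) / frac (Xv ^ (1 - 1) * Yv ^ (n - 1) * Zv ^ (1 + n - 1))"
    then have "frac (subst3 P (Xv^2) (Yv^2) (Zv^2)) = Sf n"
      unfolding D markovM_1 Lm_Sf[OF assms] using Dnz fy_nz fz_nz by (simp add: divide_cancel_right)
    then show "P = Pn n" unfolding Sf_def frac_inj by (rule subst3_sq_inj)
  qed
qed

lemma coeffA_formula: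
  assumes "n \<ge> 1" "i + j \<le> n"
  shows "coeffA i j n = int ((i + j) choose i) * int ((n - j - 1) choose (n - i - j))"
proof -
  have "i + (n - i - j) - 1 = n - j - 1" using assms by simp
  then show ?thesis using assms unfolding coeffA_def markovP_1[OF assms(1)]
    by (simp add: c3_Pn[unfolded c3_def] cf_def)
qed



lemma ln_step_le: "n \<ge> 1 \<Longrightarrow> real n * (ln (real n + 1) - ln (real n)) \<le> 1"
proof -
  assume n: "n \<ge> 1"
  have "ln ((real n + 1) / real n) \<le> (real n + 1) / real n - 1"
    by (rule ln_le_minus_one) (use n in simp)
  moreover have "ln ((real n + 1) / real n) = ln (real n + 1) - ln (real n)"
    using n by (simp add: ln_div)
  moreover have "(real n + 1) / real n - 1 = 1 / real n" using n by (simp add: field_simps)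
  ultimately have "ln (real n + 1) - ln (real n) \<le> 1 / real n" by simp
  then show ?thesis using n by (simp add: field_simps)
qed

lemma ln_step_ge: "n \<ge> 1 \<Longrightarrow> (real n + 1) * (ln (real n + 1) - ln (real n)) \<ge> 1"
proof -
  assume n: "n \<ge> 1"
  have "ln (real n / (real n + 1)) \<le> real n / (real n + 1) - 1"
    by (rule ln_le_minus_one) (use n in simp)
  moreover have "ln (real n / (real n + 1)) = ln (real n) - ln (real n + 1)"
    using n by (simp add: ln_div)
  moreover have "real n / (real n + 1) - 1 = - 1 / (real n + 1)" by (simp add: field_simps)
  ultimately have "ln (real n + 1) - ln (real n) \<ge> 1 / (real n + 1)" by simp
  then show ?thesis by (simp add: field_simps)
qed

definition Ef :: "nat \<Rightarrow> real" where
  "Ef n = ln (fact n) - (real n * ln (real n) - real n)"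

lemma Ef_bounds_Suc: "0 \<le> Ef (Suc n) \<and> Ef (Suc n) \<le> 1 + ln (real (Suc n))"
proof (induction n)
  case 0 then show ?case by (simp add: Ef_def)
next
  case (Suc m)
  define n where "n = Suc m"
  have n1: "n \<ge> 1" by (simp add: n_def)
  have IH: "0 \<le> Ef n \<and> Ef n \<le> 1 + ln (real n)" using Suc.IH by (simp add: n_def)
  have fpos: "(0::real) < fact n" by simp
  have lf: "ln (fact (Suc n) :: real) = ln (real n + 1) + ln (fact n)"
    using fpos by (simp add: ln_mult add.commute)
  have d: "Ef (Suc n) - Ef n = 1 - real n * (ln (real n + 1) - ln (real n))"
    unfolding Ef_def lf by (simp add: algebra_simps)
  have "0 \<le> Ef (Suc n)" using d ln_step_le[OF n1] IH ln_step_ge[OF n1]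
    by (simp add: algebra_simps)
  moreover have "Ef (Suc n) \<le> 1 + ln (real (Suc n))"
    using d IH ln_step_ge[OF n1] by (simp add: algebra_simps)
  ultimately show ?case by (simp add: n_def)
qed

lemma Ef_bounds: "n \<ge> 1 \<Longrightarrow> 0 \<le> Ef n \<and> Ef n \<le> 1 + ln (real n)"
  using Ef_bounds_Suc[of "n - 1"] by simp



definition xlnx :: "real \<Rightarrow> real" where "xlnx x = x * ln x"

lemma ln_over_n: "(\<lambda>n. ln (real n) / real n) \<longlonglongrightarrow> 0"
  using filterlim_compose[OF ln_x_over_x_tendsto_0 filterlim_real_sequentially] by (simp add: o_def)

lemma abs3_aux:
  fixes a b c la lb lc L :: real
  assumes "0 \<le> a \<and> a \<le> 1 + L" "0 \<le> b \<and> b \<le> 1 + lb" "0 \<le> c \<and> c \<le> 1 + lc" "lb \<le> L" "lc \<le> L" "0 \<le> L"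
  shows "\<bar>a - b - c\<bar> \<le> 3 * (1 + L)"
  using assms by (smt (verit))

lemma binom_lim:
  fixes m k :: "nat \<Rightarrow> nat" and \<alpha> \<beta> :: real
  assumes hm: "(\<lambda>n. real (m n) / real n) \<longlonglongrightarrow> \<alpha>" and hk: "(\<lambda>n. real (k n) / real n) \<longlonglongrightarrow> \<beta>"
    and b0: "0 < \<beta>" and ba: "\<beta> < \<alpha>"
  shows "\<forall>\<^sub>F n in sequentially. 1 \<le> k n \<and> k n < m n"
    and "(\<lambda>n. ln (real (m n choose k n)) / real n) \<longlonglongrightarrow> xlnx \<alpha> - xlnx \<beta> - xlnx (\<alpha> - \<beta>)"
proof -
  have e1: "\<forall>\<^sub>F n in sequentially. real (k n) / real n > 0"
    using order_tendstoD(1)[OF hk b0] .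
  have hd: "(\<lambda>n. real (m n) / real n - real (k n) / real n) \<longlonglongrightarrow> \<alpha> - \<beta>"
    by (intro tendsto_intros hm hk)
  have e2: "\<forall>\<^sub>F n in sequentially. real (m n) / real n - real (k n) / real n > 0"
    using order_tendstoD(1)[OF hd, of 0] ba by simp
  have e3: "\<forall>\<^sub>F n in sequentially. n \<ge> 1" by (rule eventually_ge_at_top)
  have ev: "\<forall>\<^sub>F n in sequentially. 1 \<le> k n \<and> k n < m n \<and> n \<ge> 1"
    using e1 e2 e3
  proof eventually_elim
    case (elim n)
    then have "real (k n) > 0" "real (m n) > real (k n)"
      by (auto simp: field_simps zero_less_divide_iff)
    then show ?case using elim by simp
  qed
  then show "\<forall>\<^sub>F n in sequentially. 1 \<le> k n \<and> k n < m n" by (rule eventually_mono) simp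
  define g where "g n = xlnx (real (m n) / real n) - xlnx (real (k n) / real n)
      - xlnx (real (m n) / real n - real (k n) / real n)" for n
  define r where "r n = (Ef (m n) - Ef (k n) - Ef (m n - k n)) / real n" for n
  have eq: "\<forall>\<^sub>F n in sequentially. ln (real (m n choose k n)) / real n = g n + r n"
    using ev
  proof eventually_elim
    case (elim n)
    define M where "M = real (m n)"
    define K where "K = real (k n)"
    define N where "N = real n"
    have dd: "real (m n - k n) = M - K" using elim by (simp add: M_def K_def of_nat_diff)
    have pos: "M > 0" "K > 0" "N > 0" "M - K > 0" using elim by (auto simp: M_def K_def N_def)
    have "ln (real (m n choose k n)) = ln (fact (m n)) - ln (fact (k n)) - ln (fact (m n - k n))"
      using elim by (simp add: binomial_fact ln_div ln_mult)
    also have "\<dots> = (M * ln M - M + Ef (m n)) - (K * ln K - K + Ef (k n)) - ((M - K) * ln (M - K) - (M - K) + Ef (m n - k n))"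
      unfolding Ef_def dd[symmetric] by (simp add: M_def K_def)
    finally have l: "ln (real (m n choose k n)) = M * ln M - K * ln K - (M - K) * ln (M - K) + (Ef (m n) - Ef (k n) - Ef (m n - k n))"
      by simp
    have gg: "g n = (M * ln M - K * ln K - (M - K) * ln (M - K)) / N"
    proof -
      have a: "M / N - K / N = (M - K) / N" by (simp add: diff_divide_distrib)
      show ?thesis unfolding g_def xlnx_def a M_def[symmetric] K_def[symmetric] N_def[symmetric]
        using pos by (simp add: ln_div field_simps)
    qed
    show ?case unfolding l gg r_def N_def[symmetric] by (simp add: add_divide_distrib diff_divide_distrib)
  qed
  have gl: "g \<longlonglongrightarrow> xlnx \<alpha> - xlnx \<beta> - xlnx (\<alpha> - \<beta>)"
    unfolding g_def xlnx_def using b0 ba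
    by (intro tendsto_intros hm hk hd) auto
  have bnd: "(\<lambda>n. (1 + ln (real (m n))) / real n) \<longlonglongrightarrow> 0"
  proof -
    have "\<forall>\<^sub>F n in sequentially. (1 + ln (real (m n))) / real n = 1 / real n + ln (real (m n) / real n) * (1 / real n) + ln (real n) / real n"
      using ev by eventually_elim (auto simp: ln_div field_simps)
    moreover have "(\<lambda>n. 1 / real n + ln (real (m n) / real n) * (1 / real n) + ln (real n) / real n) \<longlonglongrightarrow> 0 + ln \<alpha> * 0 + 0"
      using b0 ba by (intro tendsto_intros hm lim_const_over_n ln_over_n) auto
    ultimately show ?thesis by (simp add: tendsto_cong)
  qed
  have rl: "r \<longlonglongrightarrow> 0"
  proof (rule tendsto_0_le[OF bnd, where K = 3])
    show "\<forall>\<^sub>F n in sequentially. norm (r n) \<le> norm ((1 + ln (real (m n))) / real n) * 3"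
      using ev
    proof eventually_elim
      case (elim n)
      have b1: "0 \<le> Ef (m n) \<and> Ef (m n) \<le> 1 + ln (real (m n))" using Ef_bounds elim by simp
      have b2: "0 \<le> Ef (k n) \<and> Ef (k n) \<le> 1 + ln (real (k n))" using Ef_bounds elim by simp
      have "1 \<le> m n - k n" using elim by linarith
      then have b3: "0 \<le> Ef (m n - k n) \<and> Ef (m n - k n) \<le> 1 + ln (real (m n - k n))" by (rule Ef_bounds)
      have l2: "ln (real (k n)) \<le> ln (real (m n))" using elim by simp
      have l3: "ln (real (m n - k n)) \<le> ln (real (m n))" using elim by simp
      have lm: "0 \<le> ln (real (m n))" using elim by simp
      have "\<bar>Ef (m n) - Ef (k n) - Ef (m n - k n)\<bar> \<le> 3 * (1 + ln (real (m n)))"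
        by (rule abs3_aux[OF b1 b2 b3 l2 l3 lm])
      then show ?case using elim lm unfolding r_def
        by (simp add: abs_divide field_simps)
    qed
  qed
  have "(\<lambda>n. g n + r n) \<longlonglongrightarrow> xlnx \<alpha> - xlnx \<beta> - xlnx (\<alpha> - \<beta>) + 0"
    by (intro tendsto_intros gl rl)
  then show "(\<lambda>n. ln (real (m n choose k n)) / real n) \<longlonglongrightarrow> xlnx \<alpha> - xlnx \<beta> - xlnx (\<alpha> - \<beta>)"
    using tendsto_cong[OF eq] by simp
qed



lemma entropy_id:
  assumes "0 < \<gamma>" "\<gamma> < \<alpha>"
  shows "\<alpha> * entropyH (\<gamma> / \<alpha>) = xlnx \<alpha> - xlnx \<gamma> - xlnx (\<alpha> - \<gamma>)"
proof -
  have a: "1 - \<gamma> / \<alpha> = (\<alpha> - \<gamma>) / \<alpha>" using assms by (simp add: field_simps)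
  have "\<alpha> * entropyH (\<gamma> / \<alpha>) = - \<gamma> * (ln \<gamma> - ln \<alpha>) - (\<alpha> - \<gamma>) * (ln (\<alpha> - \<gamma>) - ln \<alpha>)"
    unfolding entropyH_def a using assms by (simp add: ln_div field_simps)
  then show ?thesis unfolding xlnx_def by (simp add: algebra_simps)
qed

theorem proposition7p3:
  fixes \<xi> \<eta> :: real and i j :: "nat \<Rightarrow> nat"
  assumes "\<xi> > 0" and "\<eta> > 0" and "\<xi> + \<eta> < 1"
    and "(\<lambda>n. real (i n) / real n) \<longlonglongrightarrow> \<xi>"
    and "(\<lambda>n. real (j n) / real n) \<longlonglongrightarrow> \<eta>"
  shows "(\<forall>\<^sub>F n in sequentially. coeffA (i n) (j n) n > 0)
    \<and> (\<lambda>n. ln (real_of_int (coeffA (i n) (j n) n)) / real n)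
        \<longlonglongrightarrow> (1 - \<eta>) * entropyH (\<xi> / (1 - \<eta>)) + (\<xi> + \<eta>) * entropyH (\<xi> / (\<xi> + \<eta>))"
proof -
  note hi = assms(4) and hj = assms(5)
  have hij: "(\<lambda>n. real (i n + j n) / real n) \<longlonglongrightarrow> \<xi> + \<eta>"
    using tendsto_add[OF hi hj] by (simp add: add_divide_distrib)
  have e1: "\<forall>\<^sub>F n in sequentially. real (i n + j n) / real n < 1"
    using order_tendstoD(2)[OF hij assms(3)] .
  have e2: "\<forall>\<^sub>F n in sequentially. n \<ge> 1" by (rule eventually_ge_at_top)
  have ev: "\<forall>\<^sub>F n in sequentially. i n + j n < n \<and> n \<ge> 1"
    using e1 e2 by eventually_elim (auto simp: divide_less_eq)
  define m2 where "m2 n = n - j n - 1" for n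
  define k2 where "k2 n = n - i n - j n" for n
  have hm2: "(\<lambda>n. real (m2 n) / real n) \<longlonglongrightarrow> 1 - \<eta>"
  proof -
    have "(\<lambda>n. 1 - real (j n) / real n - 1 / real n) \<longlonglongrightarrow> 1 - \<eta> - 0"
      by (intro tendsto_intros hj lim_const_over_n)
    moreover have "\<forall>\<^sub>F n in sequentially. 1 - real (j n) / real n - 1 / real n = real (m2 n) / real n"
      using ev by eventually_elim (auto simp: m2_def of_nat_diff field_simps)
    ultimately show ?thesis using tendsto_cong by force
  qed
  have hk2: "(\<lambda>n. real (k2 n) / real n) \<longlonglongrightarrow> 1 - \<xi> - \<eta>"
  proof -
    have "(\<lambda>n. 1 - real (i n) / real n - real (j n) / real n) \<longlonglongrightarrow> 1 - \<xi> - \<eta>"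
      by (intro tendsto_intros hi hj)
    moreover have "\<forall>\<^sub>F n in sequentially. 1 - real (i n) / real n - real (j n) / real n = real (k2 n) / real n"
      using ev by eventually_elim (auto simp: k2_def of_nat_diff field_simps)
    ultimately show ?thesis using tendsto_cong by force
  qed
  have B1: "\<forall>\<^sub>F n in sequentially. 1 \<le> i n \<and> i n < i n + j n"
    and L1: "(\<lambda>n. ln (real ((i n + j n) choose i n)) / real n) \<longlonglongrightarrow> xlnx (\<xi> + \<eta>) - xlnx \<xi> - xlnx (\<xi> + \<eta> - \<xi>)"
    using binom_lim[OF hij hi] assms by auto
  have B2: "\<forall>\<^sub>F n in sequentially. 1 \<le> k2 n \<and> k2 n < m2 n"
    and L2: "(\<lambda>n. ln (real (m2 n choose k2 n)) / real n) \<longlonglongrightarrow> xlnx (1 - \<eta>) - xlnx (1 - \<xi> - \<eta>) - xlnx (1 - \<eta> - (1 - \<xi> - \<eta>))"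
    using binom_lim[OF hm2 hk2] assms by auto
  have evc: "\<forall>\<^sub>F n in sequentially. coeffA (i n) (j n) n = int ((i n + j n) choose i n) * int (m2 n choose k2 n)
      \<and> ((i n + j n) choose i n) > 0 \<and> (m2 n choose k2 n) > 0"
    using ev B2
  proof eventually_elim
    case (elim n)
    then show ?case using coeffA_formula[of n "i n" "j n"] by (auto simp: m2_def k2_def)
  qed
  have pos: "\<forall>\<^sub>F n in sequentially. coeffA (i n) (j n) n > 0"
    using evc by eventually_elim simp
  have "(\<lambda>n. ln (real ((i n + j n) choose i n)) / real n + ln (real (m2 n choose k2 n)) / real n)
     \<longlonglongrightarrow> (xlnx (\<xi> + \<eta>) - xlnx \<xi> - xlnx (\<xi> + \<eta> - \<xi>)) + (xlnx (1 - \<eta>) - xlnx (1 - \<xi> - \<eta>) - xlnx (1 - \<eta> - (1 - \<xi> - \<eta>)))"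
    by (intro tendsto_intros L1 L2)
  moreover have "(xlnx (\<xi> + \<eta>) - xlnx \<xi> - xlnx (\<xi> + \<eta> - \<xi>)) + (xlnx (1 - \<eta>) - xlnx (1 - \<xi> - \<eta>) - xlnx (1 - \<eta> - (1 - \<xi> - \<eta>)))
      = (1 - \<eta>) * entropyH (\<xi> / (1 - \<eta>)) + (\<xi> + \<eta>) * entropyH (\<xi> / (\<xi> + \<eta>))"
    using entropy_id[of \<xi> "1 - \<eta>"] entropy_id[of \<xi> "\<xi> + \<eta>"] assms(1-3)
    by (simp add: algebra_simps)
  moreover have "\<forall>\<^sub>F n in sequentially. ln (real ((i n + j n) choose i n)) / real n + ln (real (m2 n choose k2 n)) / real n
      = ln (real_of_int (coeffA (i n) (j n) n)) / real n"
    using evc by eventually_elim (auto simp: ln_mult add_divide_distrib)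
  ultimately have "(\<lambda>n. ln (real_of_int (coeffA (i n) (j n) n)) / real n)
        \<longlonglongrightarrow> (1 - \<eta>) * entropyH (\<xi> / (1 - \<eta>)) + (\<xi> + \<eta>) * entropyH (\<xi> / (\<xi> + \<eta>))"
    using tendsto_cong by force
  with pos show ?thesis by blast
qed

end
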